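(* Let $Y_1=1$ and, for $n\ge2$, $Y_n=\lfloor (n+I)/2\rfloor$ with $I\sim$ Bernoulli$(1/2)$. Consider the leader election process started with $n$ players and stopped as soon as at most $3$ players remain, and let $\pi_i(n)$ be the probability that it ends with exactly $i$ players. Then for every $n\ge2$, $\pi_2(n)=\psi_2(n)$ where $\psi_2(2^x)=|2^{1+x-\lfloor x\rfloor}-3|$ for real $x\ge1$; moreover $\pi_3(n)=1-\pi_2(n)$ and $\pi_1(n)=0$ for $n\ge2$.
   Context: The process: $N_0=n$ and $N_{k+1}$ has the law of $Y_{N_k}$ given the past; it stops at the first $k$ with $N_k\le 3$, ending with $N_k$ players. *)

theory Defs
  imports "HOL-Probability.Probability"
begin

definition Ylaw :: "nat \<Rightarrow> nat pmf" where
  "Ylaw n = (if n \<le> 1 then return_pmf 1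
             else map_pmf (\<lambda>I. (n + (if I then 1 else 0)) div 2) (bernoulli_pmf (1/2)))"

text \<open>Law of the stopped chain N_{min(k,tau)}, started at N_0 = n, where tau is the first
  time with N_k <= 3 (after stopping the chain stays put).\<close>
primrec stopped_law :: "nat \<Rightarrow> nat \<Rightarrow> nat pmf" where
  "stopped_law n 0 = return_pmf n"
| "stopped_law n (Suc k) =
     bind_pmf (stopped_law n k) (\<lambda>m. if m \<le> 3 then return_pmf m else Ylaw m)"

text \<open>pi_i(n) = P(tau < infinity and N_tau = i) = lim_k P(N_{min(k,tau)} = i) for i <= 3.\<close>
definition leader_pi :: "nat \<Rightarrow> nat \<Rightarrow> real" where
  "leader_pi i n = lim (\<lambda>k. pmf (stopped_law n k) i)"

text \<open>psi_2(2^x) = |2^(1 + x - floor x) - 3|, i.e. psi_2(y) with x = log_2 y.\<close>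
definition psi2 :: "real \<Rightarrow> real" where
  "psi2 y = \<bar>2 powr (1 + log 2 y - of_int \<lfloor>log 2 y\<rfloor>) - 3\<bar>"

end

theory Submission
  imports Defs
begin

definition stepL :: "nat \<Rightarrow> nat pmf" where
  "stepL = (\<lambda>m. if m \<le> 3 then return_pmf m else Ylaw m)"

lemma stopped_first: "stopped_law n (Suc k) = bind_pmf (stepL n) (\<lambda>m. stopped_law m k)"
proof (induction k)
  case 0
  then show ?case by (simp add: stepL_def bind_return_pmf bind_return_pmf')
next
  case (Suc k)
  have "stopped_law n (Suc (Suc k)) = bind_pmf (stopped_law n (Suc k)) stepL"
    by (simp add: stepL_def)
  also have "\<dots> = bind_pmf (stepL n) (\<lambda>m. bind_pmf (stopped_law m k) stepL)"
    by (simp only: Suc.IH bind_assoc_pmf)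
  also have "\<dots> = bind_pmf (stepL n) (\<lambda>m. stopped_law m (Suc k))"
    by (simp add: stepL_def)
  finally show ?case .
qed

lemma stopped_small: "n \<le> 3 \<Longrightarrow> stopped_law n k = return_pmf n"
  by (induction k) (auto simp: bind_return_pmf)

lemma stopped_big:
  assumes "n \<ge> 4"
  shows "pmf (stopped_law n (Suc k)) i =
     (pmf (stopped_law (n div 2) k) i + pmf (stopped_law ((n+1) div 2) k) i) / 2"
proof -
  have "stepL n = map_pmf (\<lambda>I. (n + (if I then 1 else 0)) div 2) (bernoulli_pmf (1/2))"
    using assms by (simp add: stepL_def Ylaw_def)
  then show ?thesis
    by (simp only: stopped_first) (simp add: map_pmf_def bind_assoc_pmf bind_return_pmf pmf_bind)
qed

lemma ex_log: "m \<ge> (1::nat) \<Longrightarrow> \<exists>j. 2^j \<le> m \<and> m < 2^(j+1)"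
proof (induction m rule: less_induct)
  case (less m)
  show ?case
  proof (cases "m = 1")
    case True then show ?thesis by (intro exI[of _ 0]) auto
  next
    case False
    then have "m div 2 \<ge> 1" "m div 2 < m" using less.prems by auto
    then obtain j where "2^j \<le> m div 2" "m div 2 < 2^(j+1)" using less.IH by blast
    then show ?thesis by (intro exI[of _ "j+1"]) auto
  qed
qed

lemma psi2_exact:
  assumes "j \<ge> 1" "2^j \<le> m" "m < (2::nat)^(j+1)"
  shows "psi2 (real m) = \<bar>real m / 2^(j-1) - 3\<bar>"
proof -
  have mpos: "real m > 0" using assms(2) by (metis of_nat_0_less_iff order_less_le_trans zero_less_power zero_less_numeral)
  have "real (2^j) \<le> real m" using assms(2) by linarith
  then have l1: "j \<le> log 2 m" using mpos by (subst le_log_iff) (auto simp: powr_realpow)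
  have "real m < real (2^(j+1))" using assms(3) by linarith
  then have "log 2 (real m) < log 2 (2^(j+1))" using mpos by (subst log_less_cancel_iff) auto
  moreover have "log 2 ((2::real)^(j+1)) = real (j+1)" by (simp only: log_nat_power log_eq_one) simp
  ultimately have l2: "log 2 m < real (j + 1)" by simp
  have fl: "\<lfloor>log 2 (real m)\<rfloor> = int j" using l1 l2 by (simp add: floor_eq_iff)
  have "2 powr (1 + log 2 (real m) - real j) = 2 powr 1 * 2 powr (log 2 (real m)) / 2 powr (real j)"
    by (simp add: powr_add powr_diff)
  also have "\<dots> = 2 * real m / 2^j" using mpos by (simp add: powr_realpow)
  also have "\<dots> = real m / 2^(j-1)" using assms(1)
    by (cases j) auto
  finally show ?thesis unfolding psi2_def fl by simp
qed

lemma psi2_exact2: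
  assumes "j \<ge> 1" "2^j \<le> m" "m \<le> (2::nat)^(j+1)"
  shows "psi2 (real m) = \<bar>real m / 2^(j-1) - 3\<bar>"
proof (cases "m = 2^(j+1)")
  case True
  have "psi2 (real m) = \<bar>real m / 2^(j+1-1) - 3\<bar>"
    by (rule psi2_exact) (use True assms in auto)
  moreover have "real m / 2^(j+1-1) = 2" "real m / 2^(j-1) = 4" using True assms(1)
    by (auto simp: power_add) (cases j, auto)
  ultimately show ?thesis by simp
next
  case False
  then show ?thesis using assms psi2_exact by simp
qed

lemma key_int:
  fixes a b c :: int
  assumes "b = a \<or> b = a + 1" "c > 0"
  shows "\<bar>a + b - 6*c\<bar> = \<bar>a - 3*c\<bar> + \<bar>b - 3*c\<bar>"
  using assms by (cases "a \<ge> 3*c") (auto simp: abs_if)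

lemma psi2_rec:
  assumes "n \<ge> 4"
  shows "psi2 (real n) = (psi2 (real (n div 2)) + psi2 (real ((n+1) div 2))) / 2"
proof -
  obtain k where k: "2^k \<le> n" "n < 2^(k+1)" using ex_log[of n] assms by auto
  have "k \<ge> 2"
  proof (rule ccontr)
    assume "\<not> k \<ge> 2"
    then have "k \<le> 1" by simp
    then have "(2::nat)^(k+1) \<le> 2^2" by (intro power_increasing) auto
    then show False using k assms by simp
  qed
  define j where "j = k - 1"
  have kj: "k = j + 1" "j \<ge> 1" using \<open>k \<ge> 2\<close> by (auto simp: j_def)
  have "2^j \<le> n div 2" using k kj by simp
  moreover have "n div 2 \<le> 2^(j+1)" using k kj by simp
  ultimately have pa: "psi2 (real (n div 2)) = \<bar>real (n div 2) / 2^(j-1) - 3\<bar>"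
    using psi2_exact2 kj by blast
  have "2^j \<le> (n+1) div 2" using k kj by simp
  moreover have "(n+1) div 2 \<le> 2^(j+1)" using k kj by simp
  ultimately have pb: "psi2 (real ((n+1) div 2)) = \<bar>real ((n+1) div 2) / 2^(j-1) - 3\<bar>"
    using psi2_exact2 kj by blast
  have pn: "psi2 (real n) = \<bar>real n / 2^(k-1) - 3\<bar>"
    using psi2_exact[of k n] k kj by simp
  define c :: int where "c = 2^(j-1)"
  define a :: int where "a = int (n div 2)"
  define b :: int where "b = int ((n+1) div 2)"
  have cpos: "c > 0" by (simp add: c_def)
  have ab: "b = a \<or> b = a + 1" unfolding a_def b_def by presburger
  have "n div 2 + (n+1) div 2 = n" by presburger
  then have nab: "real n = real_of_int (a + b)" unfolding a_def b_def by (metis of_int_add of_int_of_nat_eq of_nat_add)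
  have c2: "(2::real)^(k-1) = 2 * real_of_int c" using kj by (cases j) (auto simp: c_def)
  have cj: "(2::real)^(j-1) = real_of_int c" by (simp add: c_def)
  have e1: "psi2 (real n) = \<bar>real_of_int (a + b - 6*c)\<bar> / (2 * real_of_int c)"
    unfolding pn c2 by (subst nab) (use cpos in \<open>simp add: field_simps abs_divide abs_mult\<close>)
  have e2: "psi2 (real (n div 2)) = \<bar>real_of_int (a - 3*c)\<bar> / real_of_int c"
    using cpos unfolding pa cj a_def by (simp add: field_simps abs_divide)
  have e3: "psi2 (real ((n+1) div 2)) = \<bar>real_of_int (b - 3*c)\<bar> / real_of_int c"
    using cpos unfolding pb cj b_def by (simp add: field_simps abs_divide)
  have "\<bar>real_of_int (a + b - 6*c)\<bar> = \<bar>real_of_int (a - 3*c)\<bar> + \<bar>real_of_int (b - 3*c)\<bar>"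
    using key_int[OF ab cpos] by (metis of_int_abs of_int_add)
  then show ?thesis unfolding e1 e2 e3 using cpos by (simp add: field_simps)
qed

lemma psi2_2: "psi2 2 = 1"
  using psi2_exact[of 1 2] by simp

lemma psi2_3: "psi2 3 = 0"
  using psi2_exact[of 1 3] by simp

lemma main_k:
  "n \<ge> 2 \<Longrightarrow> k \<ge> n \<Longrightarrow>
     pmf (stopped_law n k) 2 = psi2 (real n) \<and>
     pmf (stopped_law n k) 3 = 1 - psi2 (real n) \<and>
     pmf (stopped_law n k) 1 = 0"
proof (induction n arbitrary: k rule: less_induct)
  case (less n)
  show ?case
  proof (cases "n \<le> 3")
    case True
    then have "n = 2 \<or> n = 3" using less.prems by auto
    then show ?thesis using stopped_small[of n k] psi2_2 psi2_3 by auto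
  next
    case False
    then obtain k' where kk: "k = Suc k'" using less.prems by (cases k) auto
    have h1: "n div 2 < n" "n div 2 \<ge> 2" "k' \<ge> n div 2" using False less.prems kk by auto
    have h2: "(n+1) div 2 < n" "(n+1) div 2 \<ge> 2" "k' \<ge> (n+1) div 2" using False less.prems kk by auto
    note A = less.IH[OF h1] and B = less.IH[OF h2]
    have r: "psi2 (real n) = (psi2 (real (n div 2)) + psi2 (real ((n+1) div 2))) / 2"
      using psi2_rec False by simp
    show ?thesis unfolding kk using stopped_big[of n k' 2] stopped_big[of n k' 3] stopped_big[of n k' 1] False A B r by (auto simp: field_simps simp del: stopped_law.simps)
  qed
qed

lemma lim_ev:
  assumes "\<And>k. k \<ge> n \<Longrightarrow> f k = (c::real)"
  shows "lim f = c"
proof -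
  have "f \<longlonglongrightarrow> c"
    by (rule tendsto_eventually) (use assms in \<open>auto simp: eventually_sequentially\<close>)
  then show ?thesis by (rule limI)
qed

theorem mainTheorem7:
  fixes n :: nat
  assumes "n \<ge> 2"
  shows "leader_pi 2 n = psi2 (real n)
       \<and> leader_pi 3 n = 1 - leader_pi 2 n
       \<and> leader_pi 1 n = 0"
proof -
  have a: "leader_pi 2 n = psi2 (real n)" unfolding leader_pi_def
    by (rule lim_ev[of n]) (use main_k assms in blast)
  have b: "leader_pi 3 n = 1 - psi2 (real n)" unfolding leader_pi_def
    by (rule lim_ev[of n]) (use main_k assms in blast)
  have c: "leader_pi 1 n = 0" unfolding leader_pi_def
    by (rule lim_ev[of n]) (use main_k assms in blast)
  show ?thesis using a b c by simp
qed

end
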